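(* Let $m<n$ be positive integers with $n$ even and $(m+n)\mid mn$. Then the Alon-Tarsi number of the complete bipartite graph $K_{m,n}$ equals $\frac{mn}{m+n}+1$.
   Context: For a graph $G$ with vertices ordered $x_1,\dots,x_N$ (treated as variables over a field of characteristic $0$), the graph polynomial is $P_G=\prod_{i<j,\ x_ix_j\in E(G)}(x_i-x_j)$. The Alon-Tarsi number of $G$ is $1+\min\max_k i_k$, where the minimum is over all monomials $x_1^{i_1}\cdots x_N^{i_N}$ with nonzero coefficient in $P_G$. *)

theory Defs
  imports Complex_Main "HOL-Library.Poly_Mapping"
begin

type_synonym mpoly = "(nat \<Rightarrow>\<^sub>0 nat) \<Rightarrow>\<^sub>0 rat"

definition Var :: "nat \<Rightarrow> mpoly" where
  "Var i = Poly_Mapping.single (Poly_Mapping.single i 1) 1"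

text \<open>A graph on the vertices 0, ..., N-1 is given by a symmetric irreflexive edge
relation E; its graph polynomial is the product of (x_i - x_j) over edges with i < j.\<close>

definition graph_poly :: "nat \<Rightarrow> (nat \<Rightarrow> nat \<Rightarrow> bool) \<Rightarrow> mpoly" where
  "graph_poly N E = (\<Prod>(i,j) \<in> {(i,j). i < j \<and> j < N \<and> E i j}. Var i - Var j)"

definition alon_tarsi_number :: "nat \<Rightarrow> (nat \<Rightarrow> nat \<Rightarrow> bool) \<Rightarrow> nat" where
  "alon_tarsi_number N E =
     1 + Min {Max ((\<lambda>k. Poly_Mapping.lookup \<alpha> k) ` {..<N}) | \<alpha> :: nat \<Rightarrow>\<^sub>0 nat. Poly_Mapping.lookup (graph_poly N E) \<alpha> \<noteq> 0}"

text \<open>Complete bipartite graph K_{m,n}: parts {0..<m} and {m..<m+n}.\<close>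

definition complete_bipartite :: "nat \<Rightarrow> nat \<Rightarrow> nat \<Rightarrow> bool" where
  "complete_bipartite m i j \<longleftrightarrow> (i < m) \<noteq> (j < m)"

end

theory Submission
  imports Defs
begin

lemma lookup_single_mult_add:
  fixes p :: mpoly
  shows "Poly_Mapping.lookup (Poly_Mapping.single u 1 * p) (u + a) = Poly_Mapping.lookup p a"
  by (simp add: lookup_mult lookup_single when_mult)

lemma lookup_single_mult_zero:
  fixes p :: mpoly
  assumes "\<And>b. a \<noteq> u + b"
  shows "Poly_Mapping.lookup (Poly_Mapping.single u 1 * p) a = 0"
proof -
  have h: "(\<lambda>q. Poly_Mapping.lookup p q when a = u + q) = (\<lambda>q. 0)" using assms by (auto simp: fun_eq_iff)
  show ?thesis apply (simp add: lookup_mult lookup_single when_mult) apply (subst h) by simp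
qed

definition wB :: "nat \<Rightarrow> nat \<Rightarrow> (nat \<Rightarrow>\<^sub>0 nat) \<Rightarrow> nat" where
  "wB m n \<alpha> = (\<Sum>v\<in>{m..<m+n}. Poly_Mapping.lookup \<alpha> v)"

definition sg :: "nat \<Rightarrow> nat \<Rightarrow> mpoly \<Rightarrow> (nat \<Rightarrow>\<^sub>0 nat) \<Rightarrow> rat" where
  "sg m n p \<alpha> = (-1) ^ (wB m n \<alpha>) * Poly_Mapping.lookup p \<alpha>"

definition PS :: "(nat \<times> nat) set \<Rightarrow> mpoly" where
  "PS S = (\<Prod>(i,j)\<in>S. Var i - Var j)"

lemma wB_add: "wB m n (a + b) = wB m n a + wB m n b"
  by (simp add: wB_def lookup_add sum.distrib)

lemma wB_single_lo: "i < m \<Longrightarrow> wB m n (Poly_Mapping.single i 1) = 0"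
  by (simp add: wB_def lookup_single when_def)

lemma wB_single_hi: "m \<le> j \<Longrightarrow> j < m + n \<Longrightarrow> wB m n (Poly_Mapping.single j 1) = 1"
proof -
  assume "m \<le> j" "j < m + n"
  then have "(\<Sum>v\<in>{m..<m+n}. Poly_Mapping.lookup (Poly_Mapping.single j (1::nat)) v)
      = (\<Sum>v\<in>{m..<m+n}. if v = j then 1 else 0)"
    by (intro sum.cong) (auto simp: lookup_single when_def)
  also have "\<dots> = 1" using \<open>m \<le> j\<close> \<open>j < m + n\<close> by simp
  finally show ?thesis by (simp add: wB_def)
qed

lemma degsum_single: "v < (N::nat) \<Longrightarrow> (\<Sum>x<N. Poly_Mapping.lookup (Poly_Mapping.single v (1::nat)) x) = 1"
proof -
  assume "v < N"
  then have "(\<Sum>x<N. Poly_Mapping.lookup (Poly_Mapping.single v (1::nat)) x)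
      = (\<Sum>x<N. if x = v then 1 else 0)"
    by (intro sum.cong) (auto simp: lookup_single when_def)
  also have "\<dots> = 1" using \<open>v < N\<close> by (subst sum.delta) auto
  finally show ?thesis .
qed


lemma PS_insert:
  assumes "finite F" "(i,j) \<notin> F"
  shows "PS (insert (i,j) F) = Poly_Mapping.single (Poly_Mapping.single i 1) 1 * PS F
           - Poly_Mapping.single (Poly_Mapping.single j 1) 1 * PS F"
  using assms by (simp add: PS_def Var_def algebra_simps)

lemma IND:
  fixes m n :: nat
  assumes "finite S" "S \<subseteq> {(i,j). i < m \<and> m \<le> j \<and> j < m + n}"
  shows "(\<forall>\<alpha>. Poly_Mapping.lookup (PS S) \<alpha> \<noteq> 0 \<longrightarrow> (\<Sum>v<m+n. Poly_Mapping.lookup \<alpha> v) = card S)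
       \<and> (\<forall>\<alpha>. sg m n (PS S) \<alpha> \<ge> 0)
       \<and> (\<forall>ch. (\<forall>e\<in>S. ch e = fst e \<or> ch e = snd e) \<longrightarrow>
              sg m n (PS S) (\<Sum>e\<in>S. Poly_Mapping.single (ch e) 1) \<ge> 1)"
  using assms
proof (induction S rule: finite_induct)
  case empty
  show ?case by (simp add: PS_def sg_def lookup_one when_def wB_def)
next
  case (insert x F)
  obtain i j where x: "x = (i,j)" by (cases x)
  have ij: "i < m" "m \<le> j" "j < m + n" using insert.prems x by auto
  have IH: "\<forall>\<alpha>. Poly_Mapping.lookup (PS F) \<alpha> \<noteq> 0 \<longrightarrow> (\<Sum>v<m+n. Poly_Mapping.lookup \<alpha> v) = card F"
     "\<forall>\<alpha>. sg m n (PS F) \<alpha> \<ge> 0"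
     "\<forall>ch. (\<forall>e\<in>F. ch e = fst e \<or> ch e = snd e) \<longrightarrow>
              sg m n (PS F) (\<Sum>e\<in>F. Poly_Mapping.single (ch e) 1) \<ge> 1"
    using insert.IH insert.prems by auto
  define p where "p = PS F"
  define ei where "ei = (Poly_Mapping.single i (1::nat))"
  define ej where "ej = (Poly_Mapping.single j (1::nat))"
  define Li where "Li = (\<lambda>\<alpha>. Poly_Mapping.lookup (Poly_Mapping.single ei 1 * p) \<alpha>)"
  define Lj where "Lj = (\<lambda>\<alpha>. Poly_Mapping.lookup (Poly_Mapping.single ej 1 * p) \<alpha>)"
  have L: "Poly_Mapping.lookup (PS (insert x F)) \<alpha> = Li \<alpha> - Lj \<alpha>" for \<alpha>
    using PS_insert[of F i j] insert.hyps x by (simp add: Li_def Lj_def ei_def ej_def p_def lookup_minus)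
  have wi: "wB m n (ei + b) = wB m n b" for b using ij wB_single_lo[of i m n] by (simp add: wB_add ei_def)
  have wj: "wB m n (ej + b) = Suc (wB m n b)" for b using ij wB_single_hi[of m j n] by (simp add: wB_add ej_def)
  define X where "X = (\<lambda>\<alpha>. (-1::rat) ^ wB m n \<alpha> * Li \<alpha>)"
  define Y where "Y = (\<lambda>\<alpha>. - ((-1::rat) ^ wB m n \<alpha> * Lj \<alpha>))"
  have sgXY: "sg m n (PS (insert x F)) \<alpha> = X \<alpha> + Y \<alpha>" for \<alpha>
    by (simp add: sg_def L X_def Y_def algebra_simps)
  have Xb: "X (ei + b) = sg m n p b" for b
    by (simp add: X_def Li_def lookup_single_mult_add wi sg_def)
  have Yb: "Y (ej + b) = sg m n p b" for b
    by (simp add: Y_def Lj_def lookup_single_mult_add wj sg_def)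
  have Xnn: "X \<alpha> \<ge> 0" for \<alpha>
  proof (cases "\<exists>b. \<alpha> = ei + b")
    case True then obtain b where "\<alpha> = ei + b" by blast
    then show ?thesis using Xb IH(2) p_def by simp
  next
    case False then show ?thesis by (simp add: X_def Li_def lookup_single_mult_zero)
  qed
  have Ynn: "Y \<alpha> \<ge> 0" for \<alpha>
  proof (cases "\<exists>b. \<alpha> = ej + b")
    case True then obtain b where "\<alpha> = ej + b" by blast
    then show ?thesis using Yb IH(2) p_def by simp
  next
    case False then show ?thesis by (simp add: Y_def Lj_def lookup_single_mult_zero)
  qed
  have A: "(\<Sum>v<m+n. Poly_Mapping.lookup \<alpha> v) = card (insert x F)"
    if nz: "Poly_Mapping.lookup (PS (insert x F)) \<alpha> \<noteq> 0" for \<alpha>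
  proof -
    have cx: "card (insert x F) = Suc (card F)" using insert.hyps by simp
    have "Li \<alpha> \<noteq> 0 \<or> Lj \<alpha> \<noteq> 0" using nz L by auto
    then obtain u b where u: "u < m + n" "\<alpha> = Poly_Mapping.single u 1 + b" "Poly_Mapping.lookup p b \<noteq> 0"
    proof
      assume h: "Li \<alpha> \<noteq> 0"
      then obtain b where "\<alpha> = ei + b"
        using lookup_single_mult_zero[of \<alpha> ei p] Li_def by blast
      moreover have "Poly_Mapping.lookup p b \<noteq> 0" using h calculation
        by (simp add: Li_def lookup_single_mult_add)
      ultimately show ?thesis using that[of i b] ij ei_def by simp
    next
      assume h: "Lj \<alpha> \<noteq> 0"
      then obtain b where "\<alpha> = ej + b"
        using lookup_single_mult_zero[of \<alpha> ej p] Lj_def by blast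
      moreover have "Poly_Mapping.lookup p b \<noteq> 0" using h calculation
        by (simp add: Lj_def lookup_single_mult_add)
      ultimately show ?thesis using that[of j b] ij ej_def by simp
    qed
    have "(\<Sum>v<m+n. Poly_Mapping.lookup \<alpha> v) = (\<Sum>v<m+n. Poly_Mapping.lookup (Poly_Mapping.single u 1) v) + (\<Sum>v<m+n. Poly_Mapping.lookup b v)"
      using u by (simp add: lookup_add sum.distrib)
    also have "\<dots> = 1 + card F" using degsum_single[OF u(1)] IH(1) u(3) p_def by simp
    finally show ?thesis using cx by simp
  qed
  have C: "sg m n (PS (insert x F)) (\<Sum>e\<in>insert x F. Poly_Mapping.single (ch e) 1) \<ge> 1"
    if ch: "\<forall>e\<in>insert x F. ch e = fst e \<or> ch e = snd e" for ch
  proof -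
    have s: "(\<Sum>e\<in>insert x F. Poly_Mapping.single (ch e) (1::nat)) = Poly_Mapping.single (ch x) 1 + (\<Sum>e\<in>F. Poly_Mapping.single (ch e) 1)"
      using insert.hyps by simp
    have h1: "sg m n p (\<Sum>e\<in>F. Poly_Mapping.single (ch e) 1) \<ge> 1" using IH(3) ch p_def by auto
    let ?a = "\<Sum>e\<in>insert x F. Poly_Mapping.single (ch e) (1::nat)"
    have "ch x = i \<or> ch x = j" using ch x by auto
    then show ?thesis
    proof
      assume "ch x = i"
      then have "X (\<Sum>e\<in>insert x F. Poly_Mapping.single (ch e) 1) \<ge> 1" using s Xb h1 ei_def by simp
      then show ?thesis using sgXY[of ?a] Ynn[of ?a] by linarith
    next
      assume "ch x = j"
      then have "Y (\<Sum>e\<in>insert x F. Poly_Mapping.single (ch e) 1) \<ge> 1" using s Yb h1 ej_def by simp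
      then show ?thesis using sgXY[of ?a] Xnn[of ?a] by linarith
    qed
  qed
  have B: "sg m n (PS (insert x F)) \<alpha> \<ge> 0" for \<alpha> using sgXY[of \<alpha>] Xnn[of \<alpha>] Ynn[of \<alpha>] by linarith
  show ?case using A B C by blast
qed


definition onek :: "nat \<Rightarrow> nat \<Rightarrow> nat \<Rightarrow> nat \<Rightarrow> bool" where
  "onek k n i j \<longleftrightarrow> (\<exists>s. i * k \<le> s \<and> s < i * k + k \<and> s mod n = j)"

lemma col_count:
  fixes k n m c j :: nat
  assumes "0 < k" "k \<le> n" "m * k = n * c" "j < n"
  shows "c \<le> card {i\<in>{..<m}. onek k n i j}"
proof -
  define g where "g = (\<lambda>r. (j + n * r) div k)"
  have inj: "inj_on g {..<c}"
  proof (rule inj_onI)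
    have lt: "g r1 < g r2" if "r1 < r2" for r1 r2
    proof -
      have "n * Suc r1 \<le> n * r2" using that by (intro mult_le_mono2) simp
      then have "j + n * r1 + k \<le> j + n * r2" using assms(2) by simp
      then have "(j + n * r1 + k) div k \<le> (j + n * r2) div k" by (rule div_le_mono)
      moreover have "(j + n * r1 + k) div k = (j + n * r1) div k + 1" using assms(1) by simp
      ultimately show ?thesis by (simp add: g_def)
    qed
    fix r1 r2 assume "r1 \<in> {..<c}" "r2 \<in> {..<c}" "g r1 = g r2"
    then show "r1 = r2" using lt[of r1 r2] lt[of r2 r1] by (metis less_irrefl linorder_neqE_nat)
  qed
  have sub: "g ` {..<c} \<subseteq> {i\<in>{..<m}. onek k n i j}"
  proof
    fix i assume "i \<in> g ` {..<c}"
    then obtain r where r: "r < c" "i = g r" by auto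
    define s where "s = j + n * r"
    have "s < n * c"
    proof -
      have "s < n + n * r" using assms(4) s_def by simp
      also have "n + n * r = n * Suc r" by simp
      also have "\<dots> \<le> n * c" using r(1) by (intro mult_le_mono2) simp
      finally show ?thesis .
    qed
    then have "s < m * k" using assms(3) by simp
    then have "s div k < m" using assms(1) by (simp add: div_less_iff_less_mult)
    moreover have "onek k n (s div k) j"
      unfolding onek_def
    proof (intro exI conjI)
      show "s div k * k \<le> s" by (metis div_mult_mod_eq le_add1)
      show "s < s div k * k + k" using assms(1) by (metis div_mult_mod_eq add_less_cancel_left mod_less_divisor)
      show "s mod n = j" using assms(4) s_def by simp
    qed
    ultimately show "i \<in> {i\<in>{..<m}. onek k n i j}" using r s_def g_def by simp
  qed
  have "card (g ` {..<c}) \<le> card {i\<in>{..<m}. onek k n i j}" by (rule card_mono) (use sub in auto)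
  then show ?thesis using card_image[OF inj] by simp
qed


lemma sum_ind_card: "finite E \<Longrightarrow> (\<Sum>e\<in>E. (1::nat) when ch e = v) = card {e\<in>E. ch e = v}"
  by (simp add: when_def sum.inter_filter[symmetric])

theorem mainTheorem4:
  fixes m n :: nat
  assumes "0 < m" and "m < n" and "even n" and "(m + n) dvd (m * n)"
  shows "alon_tarsi_number (m + n) (complete_bipartite m) = m * n div (m + n) + 1"
proof -
  define N where "N = m + n"
  define k where "k = m * n div (m + n)"
  define c where "c = m - k"
  have kN: "k * N = m * n" using assms(4) by (simp add: k_def N_def)
  have kpos: "0 < k"
  proof (rule ccontr)
    assume "\<not> 0 < k" then have "k = 0" by simp
    then have "m * n = 0" using kN by simp
    then show False using assms(1,2) by simp
  qed
  have kn: "k < n"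
  proof (rule ccontr)
    assume "\<not> k < n" then have "n * N \<le> k * N" by (intro mult_le_mono1) simp
    then have "n * (m + n) \<le> m * n" using kN N_def by metis
    then have "m * n + n * n \<le> m * n" by (simp add: algebra_simps)
    then have "n * n = 0" by simp
    then show False using assms(1,2) by simp
  qed
  have km: "k < m"
  proof (rule ccontr)
    assume "\<not> k < m" then have "m * N \<le> k * N" by (intro mult_le_mono1) simp
    then have "m * (m + n) \<le> m * n" using kN N_def by metis
    then have "m * m + m * n \<le> m * n" by (simp add: algebra_simps)
    then have "m * m = 0" by simp
    then show False using assms(1,2) by simp
  qed
  have mkc: "m * k = n * c"
  proof -
    have "k * m + k * n = m * n" using kN N_def by (simp add: algebra_simps)
    then have "m * k = n * m - n * k" by (simp add: algebra_simps)
    then show ?thesis by (simp add: c_def diff_mult_distrib2)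
  qed
  define E where "E = {(i,j). i < m \<and> m \<le> j \<and> j < m + n}"
  have Eeq: "{(i,j). i < j \<and> j < m + n \<and> complete_bipartite m i j} = E"
    unfolding E_def complete_bipartite_def by auto
  have gp: "graph_poly (m + n) (complete_bipartite m) = PS E"
    unfolding graph_poly_def PS_def Eeq ..
  have EE: "E = {..<m} \<times> {m..<m+n}" unfolding E_def by auto
  have finE: "finite E" using EE by simp
  have cardE: "card E = m * n" using EE by (simp add: card_cartesian_product)
  note I = IND[OF finE, of m n, unfolded E_def[symmetric]]
  define P where "P = PS E"
  have I1: "\<And>\<alpha>. Poly_Mapping.lookup P \<alpha> \<noteq> 0 \<Longrightarrow> (\<Sum>v<N. Poly_Mapping.lookup \<alpha> v) = m * n"
    using I cardE by (simp add: P_def N_def E_def)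
  have I3: "\<And>ch. (\<forall>e\<in>E. ch e = fst e \<or> ch e = snd e) \<Longrightarrow> sg m n P (\<Sum>e\<in>E. Poly_Mapping.single (ch e) 1) \<ge> 1"
    using I by (simp add: P_def E_def)
  define MX where "MX = (\<lambda>\<alpha>::nat \<Rightarrow>\<^sub>0 nat. Max ((\<lambda>k. Poly_Mapping.lookup \<alpha> k) ` {..<N}))"
  define T where "T = {MX \<alpha> | \<alpha>. Poly_Mapping.lookup P \<alpha> \<noteq> 0}"
  have atn: "alon_tarsi_number (m + n) (complete_bipartite m) = 1 + Min T"
    unfolding alon_tarsi_number_def T_def MX_def gp P_def N_def ..
  have Npos: "0 < N" using assms(1) N_def by simp
  have lower: "k \<le> MX \<alpha>" if nz: "Poly_Mapping.lookup P \<alpha> \<noteq> 0" for \<alpha>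
  proof (rule ccontr)
    assume "\<not> k \<le> MX \<alpha>"
    moreover have "Poly_Mapping.lookup \<alpha> v \<le> MX \<alpha>" if "v \<in> {..<N}" for v
      unfolding MX_def by (rule Max_ge) (use that in auto)
    ultimately have "\<forall>v\<in>{..<N}. Poly_Mapping.lookup \<alpha> v \<le> k - 1" by fastforce
    then have "(\<Sum>v<N. Poly_Mapping.lookup \<alpha> v) \<le> card {..<N} * (k - 1)"
      using sum_bounded_above[of "{..<N}" "Poly_Mapping.lookup \<alpha>" "k - 1"] by auto
    then have "m * n \<le> N * (k - 1)" using I1[OF nz] by simp
    moreover have "N * (k - 1) < N * k" using Npos kpos by (intro mult_strict_left_mono) auto
    moreover have "N * k = m * n" using kN by (simp add: mult.commute)
    ultimately show False by linarith
  qed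
  define ch where "ch = (\<lambda>e::nat\<times>nat. if onek k n (fst e) (snd e - m) then fst e else snd e)"
  define a where "a = (\<Sum>e\<in>E. Poly_Mapping.single (ch e) (1::nat))"
  have anz: "Poly_Mapping.lookup P a \<noteq> 0"
  proof -
    have "sg m n P a \<ge> 1" unfolding a_def by (rule I3) (simp add: ch_def)
    then show ?thesis by (auto simp: sg_def)
  qed
  have la: "Poly_Mapping.lookup a v = card {e\<in>E. ch e = v}" for v
    using sum_ind_card[OF finE, of ch v] by (simp add: a_def lookup_sum lookup_single)
  have abound: "Poly_Mapping.lookup a v \<le> k" if "v < N" for v
  proof (cases "v < m")
    case True
    have "{e\<in>E. ch e = v} \<subseteq> (\<lambda>s. (v, m + s mod n)) ` {v*k..<v*k+k}"
    proof
      fix e assume e: "e \<in> {e\<in>E. ch e = v}"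
      then obtain i j where ij: "e = (i,j)" "i < m" "m \<le> j" "j < m + n" by (auto simp: E_def)
      then have o: "onek k n i (j - m)" "i = v" using e True by (auto simp: ch_def split: if_splits)
      then obtain s where "i * k \<le> s" "s < i * k + k" "s mod n = j - m" by (auto simp: onek_def)
      then show "e \<in> (\<lambda>s. (v, m + s mod n)) ` {v*k..<v*k+k}"
        using ij o by (intro image_eqI[of _ _ s]) auto
    qed
    then have "card {e\<in>E. ch e = v} \<le> card ((\<lambda>s. (v, m + s mod n)) ` {v*k..<v*k+k})"
      by (rule card_mono[rotated]) simp
    also have "\<dots> \<le> card {v*k..<v*k+k}" by (rule card_image_le) simp
    finally show ?thesis using la by simp
  next
    case False
    define j' where "j' = v - m"
    have j': "j' < n" using False that N_def j'_def by simp
    have "{e\<in>E. ch e = v} \<subseteq> (\<lambda>i. (i, v)) ` {i\<in>{..<m}. \<not> onek k n i j'}"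
    proof
      fix e assume e: "e \<in> {e\<in>E. ch e = v}"
      then obtain i j where ij: "e = (i,j)" "i < m" "m \<le> j" "j < m + n" by (auto simp: E_def)
      then have o: "\<not> onek k n i (j - m)" "j = v" using e False by (auto simp: ch_def split: if_splits)
      then show "e \<in> (\<lambda>i. (i, v)) ` {i\<in>{..<m}. \<not> onek k n i j'}"
        using ij j'_def by auto
    qed
    then have "card {e\<in>E. ch e = v} \<le> card ((\<lambda>i. (i, v)) ` {i\<in>{..<m}. \<not> onek k n i j'})"
      by (rule card_mono[rotated]) simp
    also have "\<dots> \<le> card {i\<in>{..<m}. \<not> onek k n i j'}" by (rule card_image_le) simp
    also have "{i\<in>{..<m}. \<not> onek k n i j'} = {..<m} - {i\<in>{..<m}. onek k n i j'}" by auto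
    also have "card \<dots> = m - card {i\<in>{..<m}. onek k n i j'}" by (subst card_Diff_subset) auto
    also have "\<dots> \<le> m - c" using col_count[OF kpos _ mkc j'] kn by simp
    also have "\<dots> = k" using km c_def by simp
    finally show ?thesis using la by simp
  qed
  have "MX a \<le> k" unfolding MX_def using Npos abound by (subst Max_le_iff) auto
  then have "MX a = k" using lower[OF anz] by simp
  then have kT: "k \<in> T" using anz T_def by blast
  have finT: "finite T"
  proof -
    have "T \<subseteq> MX ` Poly_Mapping.keys P" unfolding T_def using in_keys_iff[of _ P] by blast
    then show ?thesis by (rule finite_subset) simp
  qed
  have "Min T = k" using finT kT lower unfolding T_def by (intro Min_eqI) auto
  then show ?thesis using atn k_def by simp
qed

end
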